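(* Let $(S,+)$ be a commutative semigroup, let $A\subseteq S$ be a $\mathcal{CR}$-set in $(S,+)$, and let $l\in\mathbb{N}$. Then the set $$\{(a,b)\in S\times S:\ \{a,a+b,a+2b,\ldots,a+lb\}\subseteq A\}$$ is a $\mathcal{CR}$-set in the semigroup $(S\times S,+)$ (with coordinatewise addition).
   Context: For a commutative semigroup $(S,+)$ and $r,n\in\mathbb{N}$, let $S^{r\times n}$ denote the set of $r\times n$ matrices with entries in $S$. For $M=(M_{ij})\in S^{r\times n}$ and a non-empty $\alpha\subseteq\{1,\ldots,r\}$, write $M_{\alpha j}=\sum_{i\in\alpha}M_{ij}$. A subset $A\subseteq S$ is a $\mathcal{CR}$-set (combinatorially rich set) if for every $n\in\mathbb{N}$ there exists $r\in\mathbb{N}$ such that for every $M\in S^{r\times n}$ there exist a non-empty set $\alpha\subseteq\{1,\ldots,r\}$ and $s\in S$ with $s+M_{\alpha j}\in A$ for all $j\in\{1,\ldots,n\}$. For $k\in\mathbb{N}$ and $b\in S$, $kb$ denotes $b+\cdots+b$ ($k$ times). *)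

theory Defs
  imports Main "HOL-Library.Product_Plus"
begin

text \<open>Matrices in S^(r x n) are represented as functions M :: nat => nat => 'a,
 of which only the entries M i j with i in {1..r}, j in {1..n} matter.
 M_{alpha j} is the sum over i in alpha of M i j.\<close>

text \<open>Sum of f over a finite non-empty index set of naturals in a semigroup
 (no neutral element), taken in increasing order (order irrelevant by commutativity).\<close>
definition ssum :: "nat set \<Rightarrow> (nat \<Rightarrow> 'a::ab_semigroup_add) \<Rightarrow> 'a" where
  "ssum \<alpha> f = (let xs = sorted_list_of_set \<alpha> in
                  foldl (\<lambda>acc i. acc + f i) (f (hd xs)) (tl xs))"

definition CR_set :: "'a::ab_semigroup_add set \<Rightarrow> bool" where
  "CR_set A \<longleftrightarrow>
     (\<forall>n::nat \<ge> 1. \<exists>r::nat \<ge> 1. \<forall>M :: nat \<Rightarrow> nat \<Rightarrow> 'a.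
        \<exists>\<alpha> s. \<alpha> \<subseteq> {1..r} \<and> \<alpha> \<noteq> {} \<and>
          (\<forall>j\<in>{1..n}. s + ssum \<alpha> (\<lambda>i. M i j) \<in> A))"

fun smul :: "nat \<Rightarrow> 'a::plus \<Rightarrow> 'a" where
  "smul 0 b = b"   (* unused convention; only k >= 1 is used *)
| "smul (Suc 0) b = b"
| "smul (Suc (Suc k)) b = smul (Suc k) b + b"

end

theory Submission
  imports Defs
begin

lemma foldl_add_distrib:
  "foldl (\<lambda>acc i. acc + (f i + g i)) (u + v) xs
   = foldl (\<lambda>acc i. acc + f i) u xs + foldl (\<lambda>acc i. acc + g i) v xs"
  for f g :: "nat \<Rightarrow> 'a::ab_semigroup_add"
proof (induction xs arbitrary: u v)
  case (Cons a xs)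
  have "u + v + (f a + g a) = (u + f a) + (v + g a)" by (simp add: ac_simps)
  thus ?case using Cons by simp
qed simp

lemma ssum_add: "ssum \<alpha> (\<lambda>i. f i + g i) = ssum \<alpha> f + ssum \<alpha> g"
  unfolding ssum_def Let_def by (rule foldl_add_distrib)

lemma smul_add: "smul k (x + y) = smul k x + smul k (y::'a::ab_semigroup_add)"
proof (induction k)
  case (Suc k)
  show ?case
  proof (cases k)
    case (Suc m)
    thus ?thesis using Suc.IH by (simp add: ac_simps)
  qed simp
qed simp

lemma foldl_smul:
  "foldl (\<lambda>acc i. acc + smul k (f i)) (smul k u) xs
   = smul k (foldl (\<lambda>acc i. acc + f i) u xs)"
  for f :: "nat \<Rightarrow> 'a::ab_semigroup_add"
  by (induction xs arbitrary: u) (simp_all add: smul_add[symmetric])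

lemma ssum_smul: "ssum \<alpha> (\<lambda>i. smul k (f i)) = smul k (ssum \<alpha> f)"
  unfolding ssum_def Let_def by (rule foldl_smul)

lemma foldl_fst:
  "fst (foldl (\<lambda>acc i. acc + f i) u xs) = foldl (\<lambda>acc i. acc + fst (f i)) (fst u) xs"
  for f :: "nat \<Rightarrow> 'a::ab_semigroup_add \<times> 'b::ab_semigroup_add"
  by (induction xs arbitrary: u) simp_all

lemma foldl_snd:
  "snd (foldl (\<lambda>acc i. acc + f i) u xs) = foldl (\<lambda>acc i. acc + snd (f i)) (snd u) xs"
  for f :: "nat \<Rightarrow> 'a::ab_semigroup_add \<times> 'b::ab_semigroup_add"
  by (induction xs arbitrary: u) simp_all

lemma ssum_fst: "fst (ssum \<alpha> f) = ssum \<alpha> (\<lambda>i. fst (f i))"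
  unfolding ssum_def Let_def by (rule foldl_fst)

lemma ssum_snd: "snd (ssum \<alpha> f) = ssum \<alpha> (\<lambda>i. snd (f i))"
  unfolding ssum_def Let_def by (rule foldl_snd)

theorem theorem8:
  fixes A :: "'a::ab_semigroup_add set" and l :: nat
  assumes "CR_set A" and "l \<ge> 1"
  shows "CR_set ({(a, b). a \<in> A \<and> (\<forall>k\<in>{1..l}. a + smul k b \<in> A)} :: ('a \<times> 'a) set)"
  unfolding CR_set_def
proof (intro allI impI)
  fix n :: nat assume n: "n \<ge> 1"
  have "n * (l + 1) \<ge> 1" using n by simp
  from assms(1)[unfolded CR_set_def, rule_format, OF this]
  obtain r where r: "r \<ge> 1" and
    R0: "\<forall>N :: nat \<Rightarrow> nat \<Rightarrow> 'a. \<exists>\<alpha> s. \<alpha> \<subseteq> {1..r} \<and> \<alpha> \<noteq> {} \<and>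
          (\<forall>j\<in>{1..n * (l + 1)}. s + ssum \<alpha> (\<lambda>i. N i j) \<in> A)"
    by (elim exE conjE) (rule that)
  note R = spec[OF R0]
  show "\<exists>r\<ge>1. \<forall>M :: nat \<Rightarrow> nat \<Rightarrow> 'a \<times> 'a. \<exists>\<alpha> s. \<alpha> \<subseteq> {1..r} \<and> \<alpha> \<noteq> {} \<and>
          (\<forall>j\<in>{1..n}. s + ssum \<alpha> (\<lambda>i. M i j) \<in> {(a, b). a \<in> A \<and> (\<forall>k\<in>{1..l}. a + smul k b \<in> A)})"
  proof (intro exI[of _ r] conjI allI r)
    fix M :: "nat \<Rightarrow> nat \<Rightarrow> 'a \<times> 'a"
    define x :: 'a where "x = undefined"
    define jj where "jj c = (c - 1) mod n + 1" for c :: nat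
    define kk where "kk c = (c - 1) div n" for c :: nat
    define N where "N i c = (if kk c = 0 then fst (M i (jj c))
        else fst (M i (jj c)) + smul (kk c) (snd (M i (jj c)) + x))" for i c
    obtain \<alpha> t where al: "\<alpha> \<subseteq> {1..r}" "\<alpha> \<noteq> {}" and
      T: "\<forall>j\<in>{1..n * (l + 1)}. t + ssum \<alpha> (\<lambda>i. N i j) \<in> A"
      using R[of N] by blast
    define s2 where "s2 = ssum \<alpha> (\<lambda>_. x)"
    show "\<exists>\<alpha> s. \<alpha> \<subseteq> {1..r} \<and> \<alpha> \<noteq> {} \<and>
          (\<forall>j\<in>{1..n}. s + ssum \<alpha> (\<lambda>i. M i j) \<in> {(a, b). a \<in> A \<and> (\<forall>k\<in>{1..l}. a + smul k b \<in> A)})"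
    proof (intro exI[of _ \<alpha>] exI[of _ "(t, s2)"] conjI al ballI)
      fix j assume j: "j \<in> {1..n}"
      define a1 where "a1 = ssum \<alpha> (\<lambda>i. fst (M i j))"
      define b1 where "b1 = ssum \<alpha> (\<lambda>i. snd (M i j))"
      have eq: "(t, s2) + ssum \<alpha> (\<lambda>i. M i j) = (t + a1, s2 + b1)"
        by (simp add: a1_def b1_def ssum_fst ssum_snd prod_eq_iff)
      have c0: "t + a1 \<in> A"
      proof -
        have "jj j = j" "kk j = 0" using j by (auto simp: jj_def kk_def)
        hence "ssum \<alpha> (\<lambda>i. N i j) = a1" by (simp add: N_def a1_def)
        moreover have "j \<in> {1..n * (l + 1)}" using j by auto
        ultimately show ?thesis using T by auto
      qed
      have ck: "t + a1 + smul k (s2 + b1) \<in> A" if k: "k \<in> {1..l}" for k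
      proof -
        let ?c = "j + n * k"
        have e: "(?c - 1) = (j - 1) + n * k" using j by auto
        have jl: "j - 1 < n" using j by auto
        have m: "((j - 1) + n * k) mod n = j - 1" using jl by simp
        have "jj ?c = ((j - 1) + n * k) mod n + 1" by (simp only: jj_def e)
        hence "jj ?c = j" using m j by simp
        moreover have "kk ?c = k" unfolding kk_def e using jl by simp
        ultimately have "jj ?c = j" "kk ?c = k" by auto
        hence "ssum \<alpha> (\<lambda>i. N i ?c) = ssum \<alpha> (\<lambda>i. fst (M i j) + smul k (snd (M i j) + x))"
          using k by (simp add: N_def)
        also have "\<dots> = a1 + smul k (b1 + s2)"
          by (simp add: ssum_add ssum_smul a1_def b1_def s2_def)
        finally have "ssum \<alpha> (\<lambda>i. N i ?c) = a1 + smul k (s2 + b1)" by (simp add: ac_simps)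
        moreover have "?c \<in> {1..n * (l + 1)}" using j k
        proof -
          have "n * k \<le> n * l" using k by auto
          hence "j + n * k \<le> n + n * l" using j by (intro add_mono) auto
          thus ?thesis using j by (simp add: algebra_simps)
        qed
        ultimately show ?thesis using T by (metis add.assoc)
      qed
      show "(t, s2) + ssum \<alpha> (\<lambda>i. M i j) \<in> {(a, b). a \<in> A \<and> (\<forall>k\<in>{1..l}. a + smul k b \<in> A)}"
        unfolding eq using c0 ck by auto
    qed
  qed
qed

end
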